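(* In the finite-sum strongly monotone setting below, for any $0<\alpha\le\mu/(5nl^2)$ and $K\ge1$, the iterates of both PPM-RR and PPM-SO are well defined and satisfy $$\mathbb{E}\|\mathbf{z}^{K+1}_0-\mathbf{z}^*\|^2\le 2e^{-n\alpha\mu K}\|\mathbf{z}_0-\mathbf{z}^*\|^2+\frac{l^2\sigma_*^2\alpha^3n^2K}{\mu}.$$ Moreover, if $\|\nu(\mathbf{z}_0)\|n^{1/2}K/\mu>1$ and $\alpha=\min\{\mu/(5nl^2),\,2\log(\|\nu(\mathbf{z}_0)\|n^{1/2}K/\mu)/(\mu nK)\}$, then for both PPM-RR and PPM-SO $$\mathbb{E}\|\mathbf{z}^{K+1}_0-\mathbf{z}^*\|^2\le 2e^{-K/(5\kappa^2)}\|\mathbf{z}_0-\mathbf{z}^*\|^2+\frac{2\mu^2+8\kappa^2\sigma_*^2\log^3(\|\nu(\mathbf{z}_0)\|n^{1/2}K/\mu)}{\mu^2nK^2}.$$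
   Context: Setting: $n\ge1$; $\omega_1,\dots,\omega_n:\mathbb{R}^d\to\mathbb{R}^d$ are each $l$-Lipschitz (not necessarily monotone), and $\nu=\frac1n\sum_{i=1}^n\omega_i$ is $\mu$-strongly monotone ($\langle\nu(\mathbf{z}_1)-\nu(\mathbf{z}_2),\mathbf{z}_1-\mathbf{z}_2\rangle\ge\mu\|\mathbf{z}_1-\mathbf{z}_2\|^2$), with unique root $\mathbf{z}^*$. $\kappa=l/\mu$ and $\sigma_*^2=\frac1n\sum_{i=1}^n\|\omega_i(\mathbf{z}^* )\|^2$. Proximal point method without replacement: $\mathbf{z}^1_0=\mathbf{z}_0$; for each epoch $k=1,\dots,K$ with a permutation $\tau_k$ of $[n]$, $\mathbf{z}^k_i$ is the solution of the implicit equation $\mathbf{z}^k_i=\mathbf{z}^k_{i-1}-\alpha\,\omega_{\tau_k(i)}(\mathbf{z}^k_i)$ for $i=1,\dots,n$, and $\mathbf{z}^{k+1}_0=\mathbf{z}^k_n$. In PPM-RR, $\tau_1,\dots,\tau_K$ are independent uniformly random permutations; in PPM-SO a single uniformly random permutation $\tau$ is drawn and $\tau_k=\tau$ for all $k$. Expectations are over the permutations. *)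

theory Defs
  imports "HOL-Analysis.Analysis" "HOL-Combinatorics.Permutations"
begin

text \<open>Operators are indexed 0..n-1; permutations are permutations of {0..<n}.\<close>

definition nu :: "nat \<Rightarrow> (nat \<Rightarrow> 'a::real_vector \<Rightarrow> 'a) \<Rightarrow> 'a \<Rightarrow> 'a" where
  "nu n \<omega> z = (1 / real n) *\<^sub>R (\<Sum>i<n. \<omega> i z)"

definition strongly_monotone :: "real \<Rightarrow> ('a::real_inner \<Rightarrow> 'a) \<Rightarrow> bool" where
  "strongly_monotone \<mu> F \<longleftrightarrow> (\<forall>z1 z2. inner (F z1 - F z2) (z1 - z2) \<ge> \<mu> * (norm (z1 - z2))\<^sup>2)"

definition sigma_star_sq :: "nat \<Rightarrow> (nat \<Rightarrow> 'a::real_normed_vector \<Rightarrow> 'a) \<Rightarrow> 'a \<Rightarrow> real" where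
  "sigma_star_sq n \<omega> zs = (1 / real n) * (\<Sum>i<n. (norm (\<omega> i zs))\<^sup>2)"

definition prox_step :: "real \<Rightarrow> ('a::real_vector \<Rightarrow> 'a) \<Rightarrow> 'a \<Rightarrow> 'a" where
  "prox_step \<alpha> F x = (THE z. z = x - \<alpha> *\<^sub>R F z)"

definition prox_well_defined :: "nat \<Rightarrow> real \<Rightarrow> (nat \<Rightarrow> 'a::real_vector \<Rightarrow> 'a) \<Rightarrow> bool" where
  "prox_well_defined n \<alpha> \<omega> \<longleftrightarrow> (\<forall>j<n. \<forall>x. \<exists>!z. z = x - \<alpha> *\<^sub>R \<omega> j z)"

text \<open>One epoch with permutation p: z_i = prox(z_{i-1}) using omega_{p(i-1)}, i = 1..n.\<close>
definition ppm_epoch :: "nat \<Rightarrow> real \<Rightarrow> (nat \<Rightarrow> 'a::real_vector \<Rightarrow> 'a) \<Rightarrow> (nat \<Rightarrow> nat) \<Rightarrow> 'a \<Rightarrow> 'a" where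
  "ppm_epoch n \<alpha> \<omega> p z = foldl (\<lambda>x i. prox_step \<alpha> (\<omega> (p i)) x) z [0..<n]"

text \<open>ppm_run ... tau k z0 = z^{k+1}_0, epoch k uses permutation tau k (k = 1..K).\<close>
fun ppm_run :: "nat \<Rightarrow> real \<Rightarrow> (nat \<Rightarrow> 'a::real_vector \<Rightarrow> 'a) \<Rightarrow> (nat \<Rightarrow> nat \<Rightarrow> nat) \<Rightarrow> nat \<Rightarrow> 'a \<Rightarrow> 'a" where
  "ppm_run n \<alpha> \<omega> \<tau> 0 z0 = z0"
| "ppm_run n \<alpha> \<omega> \<tau> (Suc k) z0 = ppm_epoch n \<alpha> \<omega> (\<tau> (Suc k)) (ppm_run n \<alpha> \<omega> \<tau> k z0)"

definition perms :: "nat \<Rightarrow> (nat \<Rightarrow> nat) set" where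
  "perms n = {p. p permutes {0..<n}}"

text \<open>PPM-RR: expectation over K independent uniform permutations tau 1..tau K.\<close>
definition E_RR :: "nat \<Rightarrow> real \<Rightarrow> (nat \<Rightarrow> 'a::real_normed_vector \<Rightarrow> 'a) \<Rightarrow> nat \<Rightarrow> 'a \<Rightarrow> 'a \<Rightarrow> real" where
  "E_RR n \<alpha> \<omega> K z0 zs =
     (\<Sum>\<tau>\<in>PiE {1..K} (\<lambda>_. perms n). (norm (ppm_run n \<alpha> \<omega> \<tau> K z0 - zs))\<^sup>2)
       / real (card (PiE {1..K} (\<lambda>_. perms n)))"

text \<open>PPM-SO: a single uniform permutation used in every epoch.\<close>
definition E_SO :: "nat \<Rightarrow> real \<Rightarrow> (nat \<Rightarrow> 'a::real_normed_vector \<Rightarrow> 'a) \<Rightarrow> nat \<Rightarrow> 'a \<Rightarrow> 'a \<Rightarrow> real" where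
  "E_SO n \<alpha> \<omega> K z0 zs =
     (\<Sum>p\<in>perms n. (norm (ppm_run n \<alpha> \<omega> (\<lambda>_. p) K z0 - zs))\<^sup>2) / real (card (perms n))"

end

theory Submission
  imports Defs
begin


lemma perms_finite: "finite (perms n)"
  unfolding perms_def by (rule finite_permutations) simp

lemma perms_card: "card (perms n) = fact n"
  unfolding perms_def by (rule card_permutations) simp_all

lemma perm_reindex:
  assumes "t permutes {0..<n}" "\<And>p. p \<in> perms n \<Longrightarrow> g (p \<circ> t) = f p" "t \<circ> t = id"
  shows "(\<Sum>p\<in>perms n. f p) = (\<Sum>p\<in>perms n. g p)"
proof (rule sum.reindex_bij_witness[where i="\<lambda>p. p \<circ> t" and j="\<lambda>p. p \<circ> t"])
  fix p assume "p \<in> perms n"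
  then show "p \<circ> t \<circ> t = p" using assms(3) by (simp add: o_assoc[symmetric])
  show "p \<circ> t \<in> perms n" using \<open>p \<in> perms n\<close> assms(1) by (auto simp: perms_def intro: permutes_compose)
  show "p \<circ> t \<circ> t = p" using assms(3) by (simp add: o_assoc[symmetric])
  show "p \<circ> t \<in> perms n" using \<open>p \<in> perms n\<close> assms(1) by (auto simp: perms_def intro: permutes_compose)
  show "g (p \<circ> t) = f p" using assms(2) \<open>p \<in> perms n\<close> by blast
qed

lemma perm_sym1:
  assumes "j < n" "j' < n"
  shows "(\<Sum>p\<in>perms n. f (p j)) = (\<Sum>p\<in>perms n. f (p j'))"
  by (rule perm_reindex[where t="Transposition.transpose j j'"])
     (use assms in \<open>auto intro: permutes_swap_id\<close>)

lemma perm_sym2: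
  assumes "j < n" "k < n" "k' < n" "k \<noteq> j" "k' \<noteq> j"
  shows "(\<Sum>p\<in>perms n. f (p j) (p k)) = (\<Sum>p\<in>perms n. f (p j) (p k'))"
  by (rule perm_reindex[where t="Transposition.transpose k k'"])
     (use assms in \<open>auto intro: permutes_swap_id\<close>)

lemma perm_sum_eq:
  assumes "p \<in> perms n"
  shows "(\<Sum>j\<in>{0..<n}. g (p j)) = (\<Sum>a\<in>{0..<n}. g a)"
  using sum.permute[of p "{0..<n}" g] assms by (simp add: perms_def comp_def)


lemma perm_var:
  fixes v :: "nat \<Rightarrow> 'a::real_inner"
  assumes n2: "n \<ge> 2" and v0: "(\<Sum>a\<in>{0..<n}. v a) = 0" and T: "T \<subseteq> {0..<n}"
  shows "(\<Sum>p\<in>perms n. (norm (\<Sum>j\<in>T. v (p j)))\<^sup>2)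
       = real (card (perms n)) * (\<Sum>a\<in>{0..<n}. (norm (v a))\<^sup>2) / n * card T * (real n - card T) / (real n - 1)"
proof -
  define N where "N = real (card (perms n))"
  define S2 where "S2 = (\<Sum>a\<in>{0..<n}. (norm (v a))\<^sup>2)"
  define D where "D = N * S2 / n"
  have Dj: "(\<Sum>p\<in>perms n. (norm (v (p j)))\<^sup>2) = D" if j: "j < n" for j
  proof -
    have "(\<Sum>j'\<in>{0..<n}. (\<Sum>p\<in>perms n. (norm (v (p j')))\<^sup>2)) = (\<Sum>j'\<in>{0..<n}. (\<Sum>p\<in>perms n. (norm (v (p j)))\<^sup>2))"
      by (rule sum.cong[OF refl], rule perm_sym1[where f="\<lambda>a. (norm (v a))\<^sup>2"]) (use j in auto)
    also have "\<dots> = n * (\<Sum>p\<in>perms n. (norm (v (p j)))\<^sup>2)" by simp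
    finally have 1: "n * (\<Sum>p\<in>perms n. (norm (v (p j)))\<^sup>2) = (\<Sum>p\<in>perms n. \<Sum>j'\<in>{0..<n}. (norm (v (p j')))\<^sup>2)"
      using sum.swap[where g="\<lambda>j' p. (norm (v (p j')))\<^sup>2" and A="{0..<n}" and B="perms n"] by simp
    also have "\<dots> = (\<Sum>p\<in>perms n. S2)"
      unfolding S2_def by (rule sum.cong[OF refl]) (rule perm_sum_eq)
    also have "\<dots> = N * S2" by (simp add: N_def)
    finally show ?thesis using n2 unfolding D_def by (simp add: field_simps)
  qed
  have Cjk: "(\<Sum>p\<in>perms n. inner (v (p j)) (v (p k))) = - D / (real n - 1)"
    if j: "j < n" and k: "k < n" "k \<noteq> j" for j k
  proof -
    have "(\<Sum>k'\<in>{0..<n}-{j}. (\<Sum>p\<in>perms n. inner (v (p j)) (v (p k'))))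
        = (\<Sum>k'\<in>{0..<n}-{j}. (\<Sum>p\<in>perms n. inner (v (p j)) (v (p k))))"
      by (rule sum.cong[OF refl], rule perm_sym2[where f="\<lambda>a b. inner (v a) (v b)"]) (use j k in auto)
    also have "\<dots> = (real n - 1) * (\<Sum>p\<in>perms n. inner (v (p j)) (v (p k)))"
      using j n2 by (simp add: of_nat_diff)
    finally have 1: "(real n - 1) * (\<Sum>p\<in>perms n. inner (v (p j)) (v (p k)))
        = (\<Sum>p\<in>perms n. inner (v (p j)) (\<Sum>k'\<in>{0..<n}-{j}. v (p k')))"
      using sum.swap[where g="\<lambda>k' p. inner (v (p j)) (v (p k'))" and A="{0..<n}-{j}" and B="perms n"] by (simp add: inner_sum_right)
    also have "\<dots> = (\<Sum>p\<in>perms n. - (norm (v (p j)))\<^sup>2)"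
    proof (rule sum.cong[OF refl])
      fix p assume p: "p \<in> perms n"
      have "(\<Sum>k'\<in>{0..<n}. v (p k')) = 0" using perm_sum_eq[OF p, of v] v0 by simp
      moreover have "(\<Sum>k'\<in>{0..<n}. v (p k')) = v (p j) + (\<Sum>k'\<in>{0..<n}-{j}. v (p k'))"
        using j by (subst sum.remove[of _ j]) auto
      ultimately have "(\<Sum>k'\<in>{0..<n}-{j}. v (p k')) = - v (p j)" by (simp add: add_eq_0_iff)
      then show "inner (v (p j)) (\<Sum>k'\<in>{0..<n}-{j}. v (p k')) = - (norm (v (p j)))\<^sup>2"
        by (simp add: power2_norm_eq_inner)
    qed
    also have "\<dots> = - D" using Dj[OF j] by (simp add: sum_negf)
    finally show ?thesis using n2 by (simp add: field_simps)
  qed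
  have finT: "finite T" using T finite_subset by blast
  have "(\<Sum>p\<in>perms n. (norm (\<Sum>j\<in>T. v (p j)))\<^sup>2)
      = (\<Sum>p\<in>perms n. \<Sum>j\<in>T. \<Sum>k\<in>T. inner (v (p j)) (v (p k)))"
    by (simp add: power2_norm_eq_inner inner_sum_left inner_sum_right inner_commute)
  also have "\<dots> = (\<Sum>j\<in>T. \<Sum>k\<in>T. \<Sum>p\<in>perms n. inner (v (p j)) (v (p k)))"
    by (subst sum.swap, rule sum.cong[OF refl], rule sum.swap)
  also have "\<dots> = (\<Sum>j\<in>T. D - (real (card T) - 1) * D / (real n - 1))"
  proof (rule sum.cong[OF refl])
    fix j assume jT: "j \<in> T"
    then have j: "j < n" using T by auto
    have "(\<Sum>k\<in>T. \<Sum>p\<in>perms n. inner (v (p j)) (v (p k)))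
        = (\<Sum>p\<in>perms n. inner (v (p j)) (v (p j))) + (\<Sum>k\<in>T-{j}. \<Sum>p\<in>perms n. inner (v (p j)) (v (p k)))"
      using jT finT by (subst sum.remove[of _ j]) auto
    also have "(\<Sum>k\<in>T-{j}. \<Sum>p\<in>perms n. inner (v (p j)) (v (p k))) = (\<Sum>k\<in>T-{j}. - D / (real n - 1))"
      by (rule sum.cong[OF refl]) (use Cjk j T in auto)
    also have "\<dots> = (real (card T) - 1) * (- D / (real n - 1))"
      using jT finT by (simp add: of_nat_diff Suc_leI card_gt_0_iff[symmetric]; subst of_nat_diff; auto simp: card_gt_0_iff Suc_le_eq)
    also have "(\<Sum>p\<in>perms n. inner (v (p j)) (v (p j))) = D"
      using Dj[OF j] by (simp add: power2_norm_eq_inner)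
    finally show "(\<Sum>k\<in>T. \<Sum>p\<in>perms n. inner (v (p j)) (v (p k))) = D - (real (card T) - 1) * D / (real n - 1)"
      by simp
  qed
  also have "\<dots> = card T * D * (real n - card T) / (real n - 1)"
    using n2 by (simp add: field_simps)
  finally show ?thesis unfolding D_def N_def S2_def by (simp add: field_simps)
qed



lemma young: fixes a b e :: real assumes "e > 0"
  shows "(a + b)\<^sup>2 \<le> (1 + e) * a\<^sup>2 + (1 + 1/e) * b\<^sup>2"
proof -
  have "0 \<le> (e * a - b)\<^sup>2 / e" using assms by simp
  also have "(e * a - b)\<^sup>2 / e = e * a\<^sup>2 - 2*a*b + b\<^sup>2/e"
    using assms by (simp add: power2_eq_square field_simps)
  finally show ?thesis using assms by (simp add: power2_eq_square field_simps)
qed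

lemma qpow: fixes q :: real assumes "0 \<le> q" "q \<le> 1/5"
  shows "q^(Suc k) \<le> q * (1/5)^k"
  using mult_left_mono[OF power_mono[OF assms(2), of k] assms(1)] assms by simp

lemma poly_q: fixes q :: real assumes "0 \<le> q" "q \<le> 1/5"
  shows "(1 + 7*q/20) * (1 + q/8)\<^sup>2 * (1 + q + q\<^sup>2) \<le> 1 + 2*q"
proof -
  have e: "(1 + 7*q/20) * (1 + q/8)\<^sup>2 * (1 + q + q\<^sup>2) = 1 + 2*q + q*(-2/5) + 109/64*q^2 + 907/1280*q^3 + 139/1280*q^4 + 7/1280*q^5"
    by (simp add: eval_nat_numeral field_simps)
  have "q^2 \<le> q*(1/5)^1" using qpow[OF assms, of 1] by (simp add: numeral_eq_Suc)
  moreover have "q^3 \<le> q*(1/5)^2" using qpow[OF assms, of 2] by (simp add: numeral_eq_Suc)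
  moreover have "q^4 \<le> q*(1/5)^3" using qpow[OF assms, of 3] by (simp add: numeral_eq_Suc)
  moreover have "q^5 \<le> q*(1/5)^4" using qpow[OF assms, of 4] by (simp add: numeral_eq_Suc)
  ultimately show ?thesis unfolding e using assms by (simp add: power_divide)
qed

lemma exp_q: fixes q :: real assumes "0 \<le> q" "q \<le> 1/5"
  shows "(1 + 7*q/20) * (1 + q/8)\<^sup>2 / (1 + 2*q) \<le> exp (- q)"
proof -
  have "exp q \<le> 1 + q + q\<^sup>2" using exp_bound[of q] assms by simp
  then have "(1 + 7*q/20) * (1 + q/8)\<^sup>2 * exp q \<le> (1 + 7*q/20) * (1 + q/8)\<^sup>2 * (1 + q + q\<^sup>2)"
    using assms by (intro mult_left_mono) auto
  also have "\<dots> \<le> 1 + 2*q" by (rule poly_q[OF assms])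
  finally have "(1 + 7*q/20) * (1 + q/8)\<^sup>2 \<le> (1 + 2*q) * exp (-q)"
    by (simp add: exp_minus field_simps)
  then show ?thesis using assms by (simp add: field_simps)
qed



definition pit :: "real \<Rightarrow> (nat \<Rightarrow> 'a::real_vector \<Rightarrow> 'a) \<Rightarrow> (nat \<Rightarrow> nat) \<Rightarrow> 'a \<Rightarrow> nat \<Rightarrow> 'a" where
  "pit \<alpha> \<omega> p z i = foldl (\<lambda>x i. prox_step \<alpha> (\<omega> (p i)) x) z [0..<i]"

lemma pit_0[simp]: "pit \<alpha> \<omega> p z 0 = z" by (simp add: pit_def)
lemma pit_Suc: "pit \<alpha> \<omega> p z (Suc i) = prox_step \<alpha> (\<omega> (p i)) (pit \<alpha> \<omega> p z i)"
  by (simp add: pit_def)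
lemma epoch_pit: "ppm_epoch n \<alpha> \<omega> p z = pit \<alpha> \<omega> p z n"
  by (simp add: pit_def ppm_epoch_def)

lemma prox_eq: assumes "\<exists>!z. z = x - \<alpha> *\<^sub>R F z"
  shows "prox_step \<alpha> F x = x - \<alpha> *\<^sub>R F (prox_step \<alpha> F x)"
  unfolding prox_step_def by (rule theI'[OF assms])

lemma lipD: assumes "l-lipschitz_on UNIV f" shows "norm (f a - f b) \<le> l * norm (a - b)"
  using lipschitz_onD[OF assms, of a b] by (simp add: dist_norm)

lemma sum_rev_real: "(\<Sum>i<n. real (n - Suc i)) = real n * (real n - 1) / 2"
proof -
  have "(\<Sum>i<n. real (n - Suc i)) = (\<Sum>i<n. real i)"
    by (rule sum.nat_diff_reindex[where g=real])
  also have "\<dots> = real n * (real n - 1) / 2"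
    by (induction n) (auto simp: field_simps)
  finally show ?thesis .
qed

lemma B6_arith:
  fixes a N r ST A E \<alpha> l q :: real
  assumes nn: "a \<ge> 0" "N \<ge> 0" "r \<ge> 0" "ST \<ge> 0" "A \<ge> 0" "\<alpha> \<ge> 0" "l \<ge> 0"
    and a_def: "a = \<alpha> * l"
    and h1: "E \<le> l * (\<alpha> * ST + \<alpha> * l * (N * (N - 1) / 2) * (r + \<alpha> * l * A) + N * (\<alpha> * l) * (\<alpha> * ST))"
    and h2: "A \<le> N * r + \<alpha> * ST + \<alpha> * l * N * A"
    and h3: "a * N \<le> 1/5" and h4: "(a * N)\<^sup>2 \<le> q / 5"
  shows "\<alpha> * E \<le> q / 8 * r + 49/40 * l * \<alpha>\<^sup>2 * ST"
proof -
  define b where "b = a * N"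
  define X where "X = a * \<alpha> * ST"
  define B where "B = a * A"
  have b0: "b \<ge> 0" using nn by (simp add: b_def)
  have X0: "X \<ge> 0" using nn by (simp add: X_def)
  have B0: "B \<ge> 0" using nn by (simp add: B_def)
  have hb: "b \<le> 1/5" using h3 by (simp add: b_def)
  have hb2: "b\<^sup>2 \<le> q/5" using h4 by (simp add: b_def)
  have N1: "N * (N - 1) \<le> N * N" using nn by (simp add: mult_left_mono)
  have "\<alpha> * E \<le> \<alpha> * (l * (\<alpha> * ST + \<alpha> * l * (N * (N - 1) / 2) * (r + \<alpha> * l * A) + N * (\<alpha> * l) * (\<alpha> * ST)))"
    using h1 nn by (simp add: mult_left_mono)
  also have "\<dots> = X + a * a * (N * (N - 1)) / 2 * (r + B) + b * X"
    by (simp add: X_def B_def b_def a_def algebra_simps power2_eq_square)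
  also have "\<dots> \<le> X + a * a * (N * N) / 2 * (r + B) + b * X"
    using N1 nn B0 X0 by (intro add_mono mult_right_mono divide_right_mono mult_left_mono) auto
  also have "\<dots> = X + b\<^sup>2 / 2 * (r + B) + b * X" by (simp add: b_def power2_eq_square mult_ac)
  finally have s1: "\<alpha> * E \<le> X + b\<^sup>2 / 2 * (r + B) + b * X" .
  have "a * A \<le> a * (N * r + \<alpha> * ST + \<alpha> * l * N * A)" using h2 nn by (simp add: mult_left_mono)
  then have "B \<le> b * r + X + b * B" by (simp add: B_def b_def X_def a_def algebra_simps)
  then have "(4/5) * B \<le> b * r + X" using hb B0 mult_right_mono[OF hb B0] by linarith
  then have hB: "B \<le> 5/4 * (b * r + X)" by (simp add: field_simps)
  have "b\<^sup>2 / 2 * B \<le> b\<^sup>2 / 2 * (5/4 * (b * r + X))" by (rule mult_left_mono[OF hB]) simp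
  also have "\<dots> = 5/8 * b\<^sup>2 * b * r + 5/8 * b\<^sup>2 * X" by (simp add: algebra_simps)
  also have "\<dots> \<le> 5/8 * b\<^sup>2 * (1/5) * r + 5/8 * (1/25) * X"
  proof (intro add_mono)
    show "5/8 * b\<^sup>2 * b * r \<le> 5/8 * b\<^sup>2 * (1/5) * r"
      using hb b0 nn by (intro mult_right_mono mult_left_mono) auto
    have "b\<^sup>2 \<le> (1/5)\<^sup>2" using hb b0 by (intro power_mono) auto
    then show "5/8 * b\<^sup>2 * X \<le> 5/8 * (1/25) * X" using X0 by (intro mult_right_mono) (auto simp: power2_eq_square)
  qed
  finally have s2: "b\<^sup>2 / 2 * B \<le> 1/8 * b\<^sup>2 * r + 1/40 * X" by simp
  have s3: "b * X \<le> 1/5 * X" using mult_right_mono[OF hb X0] by simp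
  have s4: "b\<^sup>2 * r \<le> q/5 * r" using mult_right_mono[OF hb2 nn(3)] by simp
  have "\<alpha> * E \<le> X + b\<^sup>2/2 * r + b\<^sup>2/2 * B + b * X" using s1 by (simp add: algebra_simps add_divide_distrib)
  also have "\<dots> \<le> X + (5/8) * (b\<^sup>2 * r) + 1/40 * X + 1/5 * X" using s2 s3 by (simp add: field_simps)
  also have "\<dots> \<le> X + (5/8) * (q/5 * r) + 1/40 * X + 1/5 * X" using s4 by (simp add: mult_ac)
  also have "\<dots> = q / 8 * r + 49/40 * X" by simp
  also have "X = l * \<alpha>\<^sup>2 * ST" by (simp add: X_def a_def power2_eq_square)
  finally show ?thesis by (simp add: mult_ac)
qed

context
  fixes \<omega> :: "nat \<Rightarrow> 'a::euclidean_space \<Rightarrow> 'a" and n :: nat and l \<mu> \<alpha> :: real and zs :: 'a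
    and p :: "nat \<Rightarrow> nat"
  assumes n1: "n \<ge> 1" and lip: "\<And>i. i < n \<Longrightarrow> l-lipschitz_on UNIV (\<omega> i)"
    and mu_pos: "\<mu> > 0" and smon: "strongly_monotone \<mu> (nu n \<omega>)" and root: "nu n \<omega> zs = 0"
    and apos: "0 < \<alpha>" and ale: "\<alpha> \<le> \<mu> / (5 * real n * l\<^sup>2)" and mul: "\<mu> \<le> l"
    and wd: "prox_well_defined n \<alpha> \<omega>" and pp: "p \<in> perms n"
begin

lemma p_lt: "i < n \<Longrightarrow> p i < n"
  using pp permutes_in_image[of p "{0..<n}" i] by (auto simp: perms_def)

lemma pit_step: "i < n \<Longrightarrow> pit \<alpha> \<omega> p z (Suc i) = pit \<alpha> \<omega> p z i - \<alpha> *\<^sub>R \<omega> (p i) (pit \<alpha> \<omega> p z (Suc i))"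
  unfolding pit_Suc by (rule prox_eq) (use wd p_lt in \<open>auto simp: prox_well_defined_def\<close>)

lemma pit_diff: "i + k \<le> n \<Longrightarrow> pit \<alpha> \<omega> p z i - pit \<alpha> \<omega> p z (i + k)
   = \<alpha> *\<^sub>R (\<Sum>j\<in>{i..<i+k}. \<omega> (p j) (pit \<alpha> \<omega> p z (Suc j)))"
proof (induction k)
  case 0 then show ?case by simp
next
  case (Suc k)
  have "pit \<alpha> \<omega> p z (i + Suc k) = pit \<alpha> \<omega> p z (i + k) - \<alpha> *\<^sub>R \<omega> (p (i+k)) (pit \<alpha> \<omega> p z (Suc (i+k)))"
    using pit_step[of "i+k" z] Suc.prems by simp
  then show ?case using Suc by (simp add: algebra_simps scaleR_right_distrib)
qed

lemma lipn: "i < n \<Longrightarrow> norm (\<omega> i a - \<omega> i b) \<le> l * norm (a - b)"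
  using lipD[OF lip] by blast

lemma sum_zs: "(\<Sum>a\<in>{0..<n}. \<omega> a zs) = 0"
  using root n1 by (simp add: nu_def atLeast0LessThan)

lemma l_pos: "l > 0" using mu_pos mul by simp

lemma beta_le: "\<alpha> * l * n \<le> 1/5"
proof -
  have "\<alpha> * l * n \<le> \<mu> / (5 * real n * l\<^sup>2) * l * n"
    using ale l_pos by (intro mult_right_mono) auto
  also have "\<dots> = \<mu> / (5 * l)" using l_pos n1 by (simp add: power2_eq_square field_simps)
  also have "\<dots> \<le> 1/5" using mul l_pos by (simp add: field_simps)
  finally show ?thesis .
qed

lemma beta2_le: "(\<alpha> * l * n)\<^sup>2 \<le> (n * \<alpha> * \<mu>) / 5"
proof -
  have "(\<alpha> * l * n)\<^sup>2 = (\<alpha> * n) * (\<alpha> * n * l\<^sup>2)" by (simp add: power2_eq_square)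
  also have "\<alpha> * n * l\<^sup>2 \<le> \<mu> / 5"
    using ale l_pos n1 by (simp add: field_simps)
  then have "(\<alpha> * n) * (\<alpha> * n * l\<^sup>2) \<le> (\<alpha> * n) * (\<mu> / 5)"
    using apos by (intro mult_left_mono) auto
  finally show ?thesis by (simp add: mult_ac)
qed

lemma q_le: "n * \<alpha> * \<mu> \<le> 1/5"
proof -
  have "n * \<alpha> * \<mu> \<le> \<alpha> * l * n" using mul apos by (simp add: mult_left_mono mult_right_mono mult_ac)
  then show ?thesis using beta_le by linarith
qed

lemma epoch_main:
  "(norm (pit \<alpha> \<omega> p z n - zs))\<^sup>2 \<le> exp (- (real n * \<alpha> * \<mu>)) * (norm (z - zs))\<^sup>2
     + 43/10 * l\<^sup>2 * \<alpha>^3 / (real n * \<mu>) * (\<Sum>i<n. norm (\<Sum>j\<in>{Suc i..<n}. \<omega> (p j) zs))\<^sup>2"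
proof -
  define x where "x = pit \<alpha> \<omega> p z"
  define G where "G i = \<omega> (p i) (x (Suc i))" for i
  define v where "v i = \<omega> (p i) zs" for i
  define T where "T i = (\<Sum>j\<in>{i..<n}. v j)" for i
  define r where "r = norm (z - zs)"
  define ST where "ST = (\<Sum>i<n. norm (T (Suc i)))"
  define A where "A = (\<Sum>i<n. norm (x (Suc i) - zs))"
  define q where "q = real n * \<alpha> * \<mu>"
  have r0: "r \<ge> 0" and ST0: "ST \<ge> 0" and A0: "A \<ge> 0" by (auto simp: r_def ST_def A_def intro: sum_nonneg)
  have l0: "l \<ge> 0" using l_pos by simp
  have q0: "q > 0" using n1 apos mu_pos by (simp add: q_def)
  have hGv: "norm (G i - v i) \<le> l * norm (x (Suc i) - zs)" if "i < n" for i
    unfolding G_def v_def by (rule lipn[OF p_lt[OF that]])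
  have hsumv: "(\<Sum>i<n. v i) = 0"
    using perm_sum_eq[OF pp, of "\<lambda>a. \<omega> a zs"] sum_zs by (simp add: v_def atLeast0LessThan)
  have hx0: "z - x (Suc j) = \<alpha> *\<^sub>R (\<Sum>i<Suc j. G i)" if "j < n" for j
    using pit_diff[of 0 "Suc j" z] that by (simp add: x_def G_def atLeast0LessThan)
  have hsplit: "(\<Sum>i<Suc j. v i) + T (Suc j) = 0" if "j < n" for j
  proof -
    have "(\<Sum>i<Suc j. v i) + T (Suc j) = (\<Sum>i\<in>{0..<Suc j}. v i) + (\<Sum>i\<in>{Suc j..<n}. v i)"
      by (simp add: T_def atLeast0LessThan)
    also have "\<dots> = (\<Sum>i\<in>{0..<n}. v i)" using that by (intro sum.atLeastLessThan_concat) auto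
    finally show ?thesis using hsumv by (simp add: atLeast0LessThan)
  qed
  have B2: "norm (x (Suc j) - zs) \<le> r + \<alpha> * norm (T (Suc j)) + \<alpha> * l * A" if j: "j < n" for j
  proof -
    have "x (Suc j) - zs = (z - zs) - \<alpha> *\<^sub>R (\<Sum>i<Suc j. v i) - \<alpha> *\<^sub>R (\<Sum>i<Suc j. G i - v i)"
      using hx0[OF j] by (simp add: algebra_simps sum_subtractf scaleR_diff_right)
    also have "\<dots> = (z - zs) + \<alpha> *\<^sub>R T (Suc j) - \<alpha> *\<^sub>R (\<Sum>i<Suc j. G i - v i)"
    proof -
      have "(\<Sum>i<Suc j. v i) = - T (Suc j)" using hsplit[OF j] by (simp only: eq_neg_iff_add_eq_0)
      then show ?thesis by (simp only: scaleR_minus_right diff_minus_eq_add)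
    qed
    finally have "norm (x (Suc j) - zs) = norm ((z - zs) + \<alpha> *\<^sub>R T (Suc j) - \<alpha> *\<^sub>R (\<Sum>i<Suc j. G i - v i))"
      by (rule arg_cong[where f=norm])
    then have "norm (x (Suc j) - zs) \<le> norm (z - zs) + norm (\<alpha> *\<^sub>R T (Suc j)) + norm (\<alpha> *\<^sub>R (\<Sum>i<Suc j. G i - v i))"
      using norm_triangle_ineq4[of "(z - zs) + \<alpha> *\<^sub>R T (Suc j)" "\<alpha> *\<^sub>R (\<Sum>i<Suc j. G i - v i)"] norm_triangle_ineq[of "z - zs" "\<alpha> *\<^sub>R T (Suc j)"] by linarith
    also have "norm (\<alpha> *\<^sub>R (\<Sum>i<Suc j. G i - v i)) \<le> \<alpha> * (\<Sum>i<Suc j. l * norm (x (Suc i) - zs))"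
    proof -
      have "norm (\<Sum>i<Suc j. G i - v i) \<le> (\<Sum>i<Suc j. norm (G i - v i))" by (rule norm_sum)
      also have "\<dots> \<le> (\<Sum>i<Suc j. l * norm (x (Suc i) - zs))"
        by (rule sum_mono) (use hGv j in auto)
      finally show ?thesis using apos by (simp add: mult_left_mono)
    qed
    also have "(\<Sum>i<Suc j. l * norm (x (Suc i) - zs)) \<le> l * A"
      unfolding A_def sum_distrib_left[symmetric] using j l0
      by (intro mult_left_mono sum_mono2) auto
    finally show ?thesis using apos by (simp add: r_def mult_left_mono mult.assoc)
  qed
  have B3: "A \<le> real n * r + \<alpha> * ST + \<alpha> * l * real n * A"
  proof -
    have "A \<le> (\<Sum>j<n. r + \<alpha> * norm (T (Suc j)) + \<alpha> * l * A)"
      unfolding A_def by (rule sum_mono) (use B2 in \<open>auto simp: A_def\<close>)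
    also have "\<dots> = real n * r + \<alpha> * ST + \<alpha> * l * real n * A"
      by (simp add: sum.distrib ST_def sum_distrib_left algebra_simps)
    finally show ?thesis .
  qed
  have B4: "norm (x (Suc i) - x n) \<le> \<alpha> * norm (T (Suc i)) + \<alpha> * l * (real (n - Suc i) * (r + \<alpha> * l * A) + \<alpha> * ST)"
    if i: "i < n" for i
  proof -
    have "x (Suc i) - x n = \<alpha> *\<^sub>R (\<Sum>j\<in>{Suc i..<n}. G j)"
      using pit_diff[of "Suc i" "n - Suc i" z] i by (simp add: x_def G_def)
    also have "\<dots> = \<alpha> *\<^sub>R T (Suc i) + \<alpha> *\<^sub>R (\<Sum>j\<in>{Suc i..<n}. G j - v j)"
      by (simp add: T_def sum_subtractf scaleR_diff_right)
    finally have n1: "norm (x (Suc i) - x n) \<le> \<alpha> * norm (T (Suc i)) + \<alpha> * norm (\<Sum>j\<in>{Suc i..<n}. G j - v j)"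
      using apos norm_triangle_ineq[of "\<alpha> *\<^sub>R T (Suc i)" "\<alpha> *\<^sub>R (\<Sum>j\<in>{Suc i..<n}. G j - v j)"] by simp
    have "norm (\<Sum>j\<in>{Suc i..<n}. G j - v j) \<le> (\<Sum>j\<in>{Suc i..<n}. norm (G j - v j))" by (rule norm_sum)
    also have "\<dots> \<le> (\<Sum>j\<in>{Suc i..<n}. l * (r + \<alpha> * l * A + \<alpha> * norm (T (Suc j))))"
    proof (rule sum_mono)
      fix j assume "j \<in> {Suc i..<n}"
      then have j: "j < n" by auto
      have "norm (G j - v j) \<le> l * norm (x (Suc j) - zs)" by (rule hGv[OF j])
      also have "\<dots> \<le> l * (r + \<alpha> * norm (T (Suc j)) + \<alpha> * l * A)"
        using B2[OF j] l0 by (rule mult_left_mono)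
      finally show "norm (G j - v j) \<le> l * (r + \<alpha> * l * A + \<alpha> * norm (T (Suc j)))" by (simp add: algebra_simps)
    qed
    also have "\<dots> = l * (real (n - Suc i) * (r + \<alpha> * l * A) + \<alpha> * (\<Sum>j\<in>{Suc i..<n}. norm (T (Suc j))))"
      by (simp add: sum.distrib sum_distrib_left algebra_simps)
    also have "\<dots> \<le> l * (real (n - Suc i) * (r + \<alpha> * l * A) + \<alpha> * ST)"
    proof -
      have "(\<Sum>j\<in>{Suc i..<n}. norm (T (Suc j))) \<le> ST"
        unfolding ST_def by (rule sum_mono2) auto
      then show ?thesis using apos l0 by (intro mult_left_mono add_left_mono) auto
    qed
    finally have n2: "norm (\<Sum>j\<in>{Suc i..<n}. G j - v j) \<le> l * (real (n - Suc i) * (r + \<alpha> * l * A) + \<alpha> * ST)" .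
    have "\<alpha> * norm (\<Sum>j\<in>{Suc i..<n}. G j - v j) \<le> \<alpha> * (l * (real (n - Suc i) * (r + \<alpha> * l * A) + \<alpha> * ST))"
      by (rule mult_left_mono[OF n2]) (use apos in simp)
    then show ?thesis using n1 by (simp add: mult.assoc)
  qed
  define e where "e = (\<Sum>i<n. G i - \<omega> (p i) (x n))"
  have B5: "norm e \<le> l * (\<alpha> * ST + \<alpha> * l * (real n * (real n - 1) / 2) * (r + \<alpha> * l * A) + real n * (\<alpha> * l) * (\<alpha> * ST))"
  proof -
    have "norm e \<le> (\<Sum>i<n. norm (G i - \<omega> (p i) (x n)))" unfolding e_def by (rule norm_sum)
    also have "\<dots> \<le> (\<Sum>i<n. l * (\<alpha> * norm (T (Suc i)) + \<alpha> * l * (real (n - Suc i) * (r + \<alpha> * l * A) + \<alpha> * ST)))"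
    proof (rule sum_mono)
      fix i assume "i \<in> {..<n}" then have i: "i < n" by simp
      have "norm (G i - \<omega> (p i) (x n)) \<le> l * norm (x (Suc i) - x n)"
        unfolding G_def by (rule lipn[OF p_lt[OF i]])
      also have "\<dots> \<le> l * (\<alpha> * norm (T (Suc i)) + \<alpha> * l * (real (n - Suc i) * (r + \<alpha> * l * A) + \<alpha> * ST))"
        by (rule mult_left_mono[OF B4[OF i] l0])
      finally show "norm (G i - \<omega> (p i) (x n)) \<le> \<dots>" .
    qed
    also have "\<dots> = (\<Sum>i<n. l * \<alpha> * norm (T (Suc i)) + (l * (\<alpha> * l) * (r + \<alpha> * l * A)) * real (n - Suc i) + l * (\<alpha> * l) * (\<alpha> * ST))"
      by (rule sum.cong[OF refl]) (simp only: ring_distribs mult_ac add_ac)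
    also have "\<dots> = l * \<alpha> * ST + (l * (\<alpha> * l) * (r + \<alpha> * l * A)) * (\<Sum>i<n. real (n - Suc i)) + real n * (l * (\<alpha> * l) * (\<alpha> * ST))"
      unfolding sum.distrib sum_distrib_left[symmetric] ST_def by simp
    also have "(\<Sum>i<n. real (n - Suc i)) = real n * (real n - 1) / 2" by (rule sum_rev_real)
    finally show ?thesis by (simp add: field_simps)
  qed
  have B6: "\<alpha> * norm e \<le> q / 8 * r + 49/40 * l * \<alpha>\<^sup>2 * ST"
    by (rule B6_arith[where a="\<alpha> * l" and N="real n" and A=A])
       (use B5 B3 beta_le beta2_le apos l0 r0 ST0 A0 in \<open>auto simp: q_def mult_ac\<close>)
  have sumG: "(\<Sum>i<n. G i) = real n *\<^sub>R nu n \<omega> (x n) + e"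
  proof -
    have "(\<Sum>i<n. \<omega> (p i) (x n)) = (\<Sum>a<n. \<omega> a (x n))"
      using perm_sum_eq[OF pp, of "\<lambda>a. \<omega> a (x n)"] by (simp add: atLeast0LessThan)
    also have "\<dots> = real n *\<^sub>R nu n \<omega> (x n)" using n1 by (simp add: nu_def)
    finally show ?thesis by (simp add: e_def sum_subtractf)
  qed
  have xn: "z - x n = \<alpha> *\<^sub>R (\<Sum>i<n. G i)"
    using pit_diff[of 0 n z] by (simp add: x_def G_def atLeast0LessThan)
  define u where "u = x n - zs"
  define W where "W = 49/40 * l * \<alpha>\<^sup>2 * ST"
  have W0: "W \<ge> 0" using l0 ST0 by (simp add: W_def)
  have ueq: "(z - zs) - \<alpha> *\<^sub>R e = u + (\<alpha> * real n) *\<^sub>R nu n \<omega> (x n)"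
  proof -
    have "x n = z - \<alpha> *\<^sub>R (real n *\<^sub>R nu n \<omega> (x n) + e)" using xn sumG by (simp add: algebra_simps)
    then show ?thesis by (simp add: u_def algebra_simps)
  qed
  have mono: "inner (nu n \<omega> (x n)) u \<ge> \<mu> * (norm u)\<^sup>2"
    using smon root unfolding strongly_monotone_def u_def by (metis diff_zero)
  have "(1 + 2*q) * (norm u)\<^sup>2 \<le> (norm (u + (\<alpha> * real n) *\<^sub>R nu n \<omega> (x n)))\<^sup>2"
  proof -
    have "(norm (u + (\<alpha> * real n) *\<^sub>R nu n \<omega> (x n)))\<^sup>2
        = (norm u)\<^sup>2 + 2 * (\<alpha> * real n) * inner (nu n \<omega> (x n)) u + (norm ((\<alpha> * real n) *\<^sub>R nu n \<omega> (x n)))\<^sup>2"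
      using dot_norm[of u "(\<alpha> * real n) *\<^sub>R nu n \<omega> (x n)"] by (simp add: inner_commute field_simps)
    moreover have "2 * (\<alpha> * real n) * inner (nu n \<omega> (x n)) u \<ge> 2 * (\<alpha> * real n) * (\<mu> * (norm u)\<^sup>2)"
      using mono apos by (intro mult_left_mono) auto
    moreover have "2 * (\<alpha> * real n) * (\<mu> * (norm u)\<^sup>2) = 2 * q * (norm u)\<^sup>2" by (simp add: q_def)
    moreover have "(1 + 2*q) * (norm u)\<^sup>2 = (norm u)\<^sup>2 + 2 * q * (norm u)\<^sup>2" by (simp add: algebra_simps)
    moreover have "0 \<le> (norm ((\<alpha> * real n) *\<^sub>R nu n \<omega> (x n)))\<^sup>2" by simp
    ultimately show ?thesis by linarith
  qed
  also have "\<dots> = (norm ((z - zs) - \<alpha> *\<^sub>R e))\<^sup>2" using ueq by simp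
  also have "\<dots> \<le> ((1 + q/8) * r + W)\<^sup>2"
  proof -
    have "norm ((z - zs) - \<alpha> *\<^sub>R e) \<le> r + \<alpha> * norm e"
      using norm_triangle_ineq4[of "z - zs" "\<alpha> *\<^sub>R e"] apos by (simp add: r_def)
    also have "\<dots> \<le> (1 + q/8) * r + W" using B6 by (simp add: W_def algebra_simps)
    finally show ?thesis by (intro power_mono) auto
  qed
  also have "\<dots> \<le> (1 + 7*q/20) * ((1 + q/8) * r)\<^sup>2 + (1 + 1/(7*q/20)) * W\<^sup>2"
    by (rule young) (use q0 in simp)
  finally have main: "(1 + 2*q) * (norm u)\<^sup>2 \<le> (1 + 7*q/20) * (1 + q/8)\<^sup>2 * r\<^sup>2 + (1 + 20/(7*q)) * W\<^sup>2"
    by (simp add: power_mult_distrib mult_ac)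
  have c1: "(1 + 7*q/20) * (1 + q/8)\<^sup>2 / (1 + 2*q) \<le> exp (- q)"
    by (rule exp_q) (use q0 q_le in \<open>auto simp: q_def\<close>)
  have c2: "(1 + 20/(7*q)) / (1 + 2*q) \<le> 20 / (7*q)"
  proof -
    have "(1 + 20/(7*q)) / (1+2*q) = (7*q+20) / ((7*q)*(1+2*q))" using q0 by (simp add: field_simps)
    also have "\<dots> \<le> 20*(1+2*q) / ((7*q)*(1+2*q))" by (rule divide_right_mono) (use q0 in auto)
    also have "\<dots> = 20/(7*q)" by (rule mult_divide_mult_cancel_right) (use q0 in linarith)
    finally show ?thesis .
  qed
  have pos: "1 + 2*q > 0" using q0 by simp
  have "(norm u)\<^sup>2 \<le> ((1 + 7*q/20) * (1 + q/8)\<^sup>2 * r\<^sup>2 + (1 + 20/(7*q)) * W\<^sup>2) / (1 + 2*q)"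
    unfolding pos_le_divide_eq[OF pos] using main by (simp only: mult.commute)
  also have "\<dots> = ((1 + 7*q/20) * (1 + q/8)\<^sup>2 / (1 + 2*q)) * r\<^sup>2 + ((1 + 20/(7*q)) / (1 + 2*q)) * W\<^sup>2"
    by (rule add_divide_distrib[THEN trans]) (simp only: times_divide_eq_left)
  also have "\<dots> \<le> exp (- q) * r\<^sup>2 + 20 / (7*q) * W\<^sup>2"
    by (intro add_mono mult_right_mono c1 c2) auto
  also have "20 / (7*q) * W\<^sup>2 \<le> 43/10 * l\<^sup>2 * \<alpha>^3 / (real n * \<mu>) * ST\<^sup>2"
  proof -
    have "20 / (7*q) * W\<^sup>2 = (20 * 2401 / (7 * 1600)) * (l\<^sup>2 * \<alpha>^3 / (real n * \<mu>) * ST\<^sup>2)"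
      using apos n1 mu_pos by (simp add: W_def q_def power2_eq_square power3_eq_cube field_simps)
    also have "\<dots> \<le> 43/10 * (l\<^sup>2 * \<alpha>^3 / (real n * \<mu>) * ST\<^sup>2)"
      using apos n1 mu_pos by (intro mult_right_mono) auto
    finally show ?thesis by simp
  qed
  finally show ?thesis
    by (simp add: u_def x_def r_def q_def ST_def T_def v_def)
qed

end



lemma closed_form: "(\<Sum>i<n. real (n - Suc i) * real (Suc i)) * 6 = real n ^ 3 - real n"
proof (induction n)
  case 0 then show ?case by simp
next
  case (Suc n)
  have "(\<Sum>i<Suc n. real (Suc n - Suc i) * real (Suc i)) = (\<Sum>i<n. real (Suc n - Suc i) * real (Suc i))"
    by simp
  also have "\<dots> = (\<Sum>i<n. real (n - Suc i) * real (Suc i) + real (Suc i))"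
    by (rule sum.cong[OF refl]) (auto simp: of_nat_diff algebra_simps)
  also have "\<dots> = (\<Sum>i<n. real (n - Suc i) * real (Suc i)) + (\<Sum>i<n. real (Suc i))"
    by (rule sum.distrib)
  also have "(\<Sum>i<n. real (Suc i)) = real n * (real n + 1) / 2"
    by (induction n) (auto simp: field_simps)
  finally show ?case using Suc.IH by (simp add: field_simps power3_eq_cube)
qed

lemma noise_exp:
  fixes \<omega> :: "nat \<Rightarrow> 'a::real_inner \<Rightarrow> 'a"
  assumes n1: "n \<ge> 1" and s0: "(\<Sum>a\<in>{0..<n}. \<omega> a zs) = 0"
  shows "(\<Sum>p\<in>perms n. (\<Sum>i<n. norm (\<Sum>j\<in>{Suc i..<n}. \<omega> (p j) zs))\<^sup>2)
       \<le> real (card (perms n)) * sigma_star_sq n \<omega> zs * (real n ^ 3 - real n) / 6"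
proof (cases "n = 1")
  case True then show ?thesis by simp
next
  case False
  then have n2: "n \<ge> 2" using n1 by simp
  define m where "m = n - 1"
  have nm: "n = Suc m" using n1 by (simp add: m_def)
  define N where "N = real (card (perms n))"
  define a where "a p i = norm (\<Sum>j\<in>{Suc i..<n}. \<omega> (p j) zs)" for p i
  have cs: "(\<Sum>i<n. a p i)\<^sup>2 \<le> real m * (\<Sum>i<n. (a p i)\<^sup>2)" for p
  proof -
    have "(\<Sum>i<n. a p i) = (\<Sum>i<m. a p i)" by (simp add: nm a_def)
    then have "(\<Sum>i<n. a p i)\<^sup>2 \<le> (\<Sum>i<m. (a p i)\<^sup>2) * card {..<m}"
      using sum_squared_le_sum_of_squares[of "a p" "{..<m}"] by simp
    also have "\<dots> \<le> (\<Sum>i<n. (a p i)\<^sup>2) * real m"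
      unfolding card_lessThan by (intro mult_right_mono sum_mono2) (auto simp: nm)
    finally show ?thesis by (simp add: mult.commute)
  qed
  have pv: "(\<Sum>p\<in>perms n. (a p i)\<^sup>2) = N * sigma_star_sq n \<omega> zs * real (n - Suc i) * real (Suc i) / real m"
    if i: "i < n" for i
  proof -
    have "(\<Sum>p\<in>perms n. (a p i)\<^sup>2) = N * (\<Sum>a\<in>{0..<n}. (norm (\<omega> a zs))\<^sup>2) / n * card {Suc i..<n} * (real n - card {Suc i..<n}) / (real n - 1)"
      unfolding a_def N_def by (rule perm_var[where v="\<lambda>a. \<omega> a zs"]) (use n2 s0 in auto)
    also have "real n - card {Suc i..<n} = real (Suc i)" using i by (simp add: of_nat_diff)
    also have "real n - 1 = real m" using nm by simp
    finally show ?thesis by (simp add: sigma_star_sq_def atLeast0LessThan)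
  qed
  have "(\<Sum>p\<in>perms n. (\<Sum>i<n. a p i)\<^sup>2) \<le> (\<Sum>p\<in>perms n. real m * (\<Sum>i<n. (a p i)\<^sup>2))"
    by (rule sum_mono) (rule cs)
  also have "\<dots> = real m * (\<Sum>i<n. \<Sum>p\<in>perms n. (a p i)\<^sup>2)"
    by (simp add: sum_distrib_left[symmetric] sum.swap[where A="perms n"])
  also have "\<dots> = real m * (\<Sum>i<n. N * sigma_star_sq n \<omega> zs / real m * (real (n - Suc i) * real (Suc i)))"
    by (intro arg_cong[where f="\<lambda>x. real m * x"] sum.cong refl) (simp add: pv)
  also have "\<dots> = N * sigma_star_sq n \<omega> zs * (\<Sum>i<n. real (n - Suc i) * real (Suc i))"
    using n2 by (simp only: sum_distrib_left[symmetric]) (simp add: m_def)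
  also have "\<dots> = N * sigma_star_sq n \<omega> zs * (real n ^ 3 - real n) / 6"
    using closed_form[of n] by simp
  finally show ?thesis by (simp add: a_def N_def)
qed



lemma sum_PiE_single:
  fixes f :: "'b \<Rightarrow> real"
  assumes I: "finite I" "k \<in> I" and P: "finite P" "P \<noteq> {}"
  shows "(\<Sum>\<tau>\<in>PiE I (\<lambda>_. P). f (\<tau> k)) = real (card (PiE I (\<lambda>_. P))) / real (card P) * (\<Sum>p\<in>P. f p)"
proof -
  define g where "g x y = (if x = k then f y else 1)" for x y
  have "(\<Prod>x\<in>I. \<Sum>y\<in>P. g x y) = (\<Sum>\<tau>\<in>PiE I (\<lambda>_. P). \<Prod>x\<in>I. g x (\<tau> x))"
    by (rule prod_sum_PiE) (use I P in auto)
  also have "\<dots> = (\<Sum>\<tau>\<in>PiE I (\<lambda>_. P). f (\<tau> k))"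
  proof (rule sum.cong[OF refl])
    fix \<tau> show "(\<Prod>x\<in>I. g x (\<tau> x)) = f (\<tau> k)"
      using I by (subst prod.remove[of I k]) (auto simp: g_def)
  qed
  finally have 1: "(\<Sum>\<tau>\<in>PiE I (\<lambda>_. P). f (\<tau> k)) = (\<Prod>x\<in>I. \<Sum>y\<in>P. g x y)" ..
  have "(\<Prod>x\<in>I. \<Sum>y\<in>P. g x y) = (\<Sum>y\<in>P. f y) * (\<Prod>x\<in>I-{k}. real (card P))"
    using I by (subst prod.remove[of I k]) (auto simp: g_def intro!: prod.cong)
  also have "\<dots> = (\<Sum>y\<in>P. f y) * real (card P) ^ (card I - 1)"
    using I by simp
  also have "real (card (PiE I (\<lambda>_. P))) = real (card P) ^ card I"
    using I by (simp add: card_PiE)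
  moreover have "real (card P) ^ card I = real (card P) * real (card P) ^ (card I - 1)"
    using I by (cases "card I") (auto simp: card_gt_0_iff)
  ultimately show ?thesis using 1 P by (auto simp: field_simps)
qed

lemma lip_nu:
  fixes \<omega> :: "nat \<Rightarrow> 'a::real_normed_vector \<Rightarrow> 'a"
  assumes n1: "n \<ge> 1" and lip: "\<And>i. i < n \<Longrightarrow> l-lipschitz_on UNIV (\<omega> i)"
  shows "norm (nu n \<omega> a - nu n \<omega> b) \<le> l * norm (a - b)"
proof -
  have "nu n \<omega> a - nu n \<omega> b = (1 / real n) *\<^sub>R (\<Sum>i<n. \<omega> i a - \<omega> i b)"
    by (simp add: nu_def sum_subtractf scaleR_diff_right)
  then have "norm (nu n \<omega> a - nu n \<omega> b) = (1 / real n) * norm (\<Sum>i<n. \<omega> i a - \<omega> i b)"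
    by simp
  also have "\<dots> \<le> (1 / real n) * (\<Sum>i<n. l * norm (a - b))"
    by (intro mult_left_mono order_trans[OF norm_sum] sum_mono) (auto intro: lipD lip)
  also have "\<dots> = l * norm (a - b)" using n1 by simp
  finally show ?thesis .
qed

lemma mu_le_l:
  fixes \<omega> :: "nat \<Rightarrow> 'a::euclidean_space \<Rightarrow> 'a"
  assumes n1: "n \<ge> 1" and lip: "\<And>i. i < n \<Longrightarrow> l-lipschitz_on UNIV (\<omega> i)"
    and smon: "strongly_monotone \<mu> (nu n \<omega>)"
  shows "\<mu> \<le> l"
proof -
  obtain b :: 'a where b: "b \<in> Basis" using nonempty_Basis by blast
  then have nb: "norm b = 1" by simp
  have "\<mu> * (norm (b - 0))\<^sup>2 \<le> inner (nu n \<omega> b - nu n \<omega> 0) (b - 0)"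
    using smon unfolding strongly_monotone_def by blast
  also have "\<dots> \<le> norm (nu n \<omega> b - nu n \<omega> 0) * norm (b - 0)" by (rule norm_cauchy_schwarz)
  also have "\<dots> \<le> l * norm (b - 0) * norm (b - 0)"
    by (intro mult_right_mono lip_nu[OF n1 lip]) auto
  finally show ?thesis using nb by simp
qed

lemma wd_lemma:
  fixes \<omega> :: "nat \<Rightarrow> 'a::euclidean_space \<Rightarrow> 'a"
  assumes n1: "n \<ge> 1" and lip: "\<And>i. i < n \<Longrightarrow> l-lipschitz_on UNIV (\<omega> i)"
    and mu_pos: "\<mu> > 0" and mul: "\<mu> \<le> l"
    and apos: "0 < \<alpha>" and ale: "\<alpha> \<le> \<mu> / (5 * real n * l\<^sup>2)"
  shows "prox_well_defined n \<alpha> \<omega>"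
  unfolding prox_well_defined_def
proof (intro allI impI)
  fix j x assume j: "j < n"
  have l_pos: "l > 0" using mu_pos mul by simp
  have "\<alpha> * l * n \<le> \<mu> / (5 * real n * l\<^sup>2) * l * n"
    using ale l_pos by (intro mult_right_mono) auto
  also have "\<dots> = \<mu> / (5 * l)" using l_pos n1 by (simp add: power2_eq_square field_simps)
  also have "\<dots> \<le> 1/5" using mul l_pos by (simp add: field_simps)
  finally have b: "\<alpha> * l * n \<le> 1/5" .
  have "\<alpha> * l \<le> \<alpha> * l * n" using n1 apos l_pos by simp
  then have c1: "\<alpha> * l < 1" using b by linarith
  have "\<exists>!z. (\<lambda>z. x - \<alpha> *\<^sub>R \<omega> j z) z = z"
  proof (rule banach_fix_type[where c="\<alpha> * l"])
    show "0 \<le> \<alpha> * l" using apos l_pos by simp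
    show "\<alpha> * l < 1" by (rule c1)
    show "\<forall>a b. dist (x - \<alpha> *\<^sub>R \<omega> j a) (x - \<alpha> *\<^sub>R \<omega> j b) \<le> \<alpha> * l * dist a b"
    proof (intro allI)
      fix a b
      have "dist (x - \<alpha> *\<^sub>R \<omega> j a) (x - \<alpha> *\<^sub>R \<omega> j b) = \<alpha> * norm (\<omega> j a - \<omega> j b)"
        using apos by (simp add: dist_norm scaleR_diff_right[symmetric] norm_minus_commute)
      also have "\<dots> \<le> \<alpha> * (l * norm (a - b))"
        using lipD[OF lip[OF j]] apos by (intro mult_left_mono) auto
      finally show "dist (x - \<alpha> *\<^sub>R \<omega> j a) (x - \<alpha> *\<^sub>R \<omega> j b) \<le> \<alpha> * l * dist a b"
        by (simp add: dist_norm mult.assoc)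
    qed
  qed
  then show "\<exists>!z. z = x - \<alpha> *\<^sub>R \<omega> j z" by (metis (no_types, lifting))
qed



lemma part1:
  fixes \<omega> :: "nat \<Rightarrow> 'a::euclidean_space \<Rightarrow> 'a"
    and n :: nat and l \<mu> :: real and zs z0 :: 'a
  assumes n1: "n \<ge> 1"
    and lip: "\<And>i. i < n \<Longrightarrow> l-lipschitz_on UNIV (\<omega> i)"
    and mu_pos: "\<mu> > 0"
    and smon: "strongly_monotone \<mu> (nu n \<omega>)"
    and root: "nu n \<omega> zs = 0"
    and apos: "0 < \<alpha>" and ale: "\<alpha> \<le> \<mu> / (5 * real n * l\<^sup>2)" and K1: "K \<ge> 1"
  shows "prox_well_defined n \<alpha> \<omega> \<and>
        E_RR n \<alpha> \<omega> K z0 zs \<le> 2 * exp (- (real n * \<alpha> * \<mu> * real K)) * (norm (z0 - zs))\<^sup>2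
            + l\<^sup>2 * sigma_star_sq n \<omega> zs * \<alpha>^3 * (real n)\<^sup>2 * real K / \<mu> \<and>
        E_SO n \<alpha> \<omega> K z0 zs \<le> 2 * exp (- (real n * \<alpha> * \<mu> * real K)) * (norm (z0 - zs))\<^sup>2
            + l\<^sup>2 * sigma_star_sq n \<omega> zs * \<alpha>^3 * (real n)\<^sup>2 * real K / \<mu>"
proof -
  have mul: "\<mu> \<le> l" by (rule mu_le_l[OF n1 lip smon])
  have wd: "prox_well_defined n \<alpha> \<omega>" by (rule wd_lemma[OF n1 lip mu_pos mul apos ale])
  have l_pos: "l > 0" using mu_pos mul by simp
  define Nz where "Nz p = (\<Sum>i<n. norm (\<Sum>j\<in>{Suc i..<n}. \<omega> (p j) zs))\<^sup>2" for p
  define c where "c = 43/10 * l\<^sup>2 * \<alpha>^3 / (real n * \<mu>)"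
  define Dn where "Dn p = c * Nz p" for p
  define q where "q = real n * \<alpha> * \<mu>"
  define r0 where "r0 = (norm (z0 - zs))\<^sup>2"
  define \<sigma> where "\<sigma> = sigma_star_sq n \<omega> zs"
  define V where "V = l\<^sup>2 * \<sigma> * \<alpha>^3 * (real n)\<^sup>2 / \<mu>"
  define N where "N = real (card (perms n))"
  have c0: "c \<ge> 0" using apos mu_pos by (simp add: c_def)
  have Dn0: "Dn p \<ge> 0" for p by (simp add: Dn_def Nz_def c0)
  have q0: "q \<ge> 0" using apos mu_pos by (simp add: q_def)
  have sig0: "\<sigma> \<ge> 0" by (simp add: \<sigma>_def sigma_star_sq_def sum_nonneg)
  have N0: "N > 0" by (simp add: N_def perms_card)
  have step: "(norm (ppm_epoch n \<alpha> \<omega> p z - zs))\<^sup>2 \<le> exp (- q) * (norm (z - zs))\<^sup>2 + Dn p"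
    if p: "p \<in> perms n" for p z
    using epoch_main[OF n1 lip mu_pos smon root apos ale mul wd p, of z]
    by (simp add: epoch_pit Dn_def Nz_def c_def q_def)
  have run: "(norm (ppm_run n \<alpha> \<omega> \<tau> k z0 - zs))\<^sup>2 \<le> exp (- (q * k)) * r0 + (\<Sum>j\<in>{1..k}. Dn (\<tau> j))"
    if \<tau>: "\<And>j. j \<in> {1..K} \<Longrightarrow> \<tau> j \<in> perms n" and k: "k \<le> K" for \<tau> k
    using k
  proof (induction k)
    case 0 then show ?case by (simp add: r0_def)
  next
    case (Suc k)
    have "(norm (ppm_run n \<alpha> \<omega> \<tau> (Suc k) z0 - zs))\<^sup>2
        \<le> exp (- q) * (norm (ppm_run n \<alpha> \<omega> \<tau> k z0 - zs))\<^sup>2 + Dn (\<tau> (Suc k))"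
      using step[OF \<tau>, of "Suc k"] Suc.prems by simp
    also have "\<dots> \<le> exp (- q) * (exp (- (q * k)) * r0 + (\<Sum>j\<in>{1..k}. Dn (\<tau> j))) + Dn (\<tau> (Suc k))"
      using Suc by (intro add_mono mult_left_mono) auto
    also have "\<dots> = exp (- (q * Suc k)) * r0 + exp (- q) * (\<Sum>j\<in>{1..k}. Dn (\<tau> j)) + Dn (\<tau> (Suc k))"
      by (simp add: algebra_simps exp_add[symmetric])
    also have "\<dots> \<le> exp (- (q * Suc k)) * r0 + (\<Sum>j\<in>{1..k}. Dn (\<tau> j)) + Dn (\<tau> (Suc k))"
    proof -
      have "exp (- q) \<le> 1" using q0 by simp
      then have "exp (- q) * (\<Sum>j\<in>{1..k}. Dn (\<tau> j)) \<le> 1 * (\<Sum>j\<in>{1..k}. Dn (\<tau> j))"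
        by (intro mult_right_mono sum_nonneg Dn0)
      then show ?thesis by simp
    qed
    also have "\<dots> = exp (- (q * Suc k)) * r0 + (\<Sum>j\<in>{1..Suc k}. Dn (\<tau> j))"
      by simp
    finally show ?case .
  qed
  have noise: "(\<Sum>p\<in>perms n. Dn p) \<le> N * V"
  proof -
    have s0: "(\<Sum>a\<in>{0..<n}. \<omega> a zs) = 0" using root n1 by (simp add: nu_def atLeast0LessThan)
    have "(\<Sum>p\<in>perms n. Dn p) = c * (\<Sum>p\<in>perms n. Nz p)" by (simp add: Dn_def sum_distrib_left)
    also have "\<dots> \<le> c * (N * \<sigma> * (real n ^ 3 - real n) / 6)"
      unfolding Nz_def N_def \<sigma>_def by (intro mult_left_mono noise_exp[where \<omega>=\<omega> and zs=zs, OF n1 s0] c0)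
    also have "\<dots> = N * (43/60 * l\<^sup>2 * \<sigma> * \<alpha>^3 * ((real n)\<^sup>2 - 1) / \<mu>)"
      using n1 mu_pos by (simp add: c_def power2_eq_square power3_eq_cube field_simps)
    also have "\<dots> \<le> N * V"
    proof (intro mult_left_mono)
      show "43/60 * l\<^sup>2 * \<sigma> * \<alpha>^3 * ((real n)\<^sup>2 - 1) / \<mu> \<le> V"
      proof -
        have Y0: "0 \<le> l\<^sup>2 * \<sigma> * \<alpha>^3" using sig0 apos by simp
        have "43/60 * l\<^sup>2 * \<sigma> * \<alpha>^3 * ((real n)\<^sup>2 - 1) / \<mu> = (l\<^sup>2 * \<sigma> * \<alpha>^3) * (43/60 * ((real n)\<^sup>2 - 1)) / \<mu>"
          by (simp add: mult_ac)
        also have "\<dots> \<le> (l\<^sup>2 * \<sigma> * \<alpha>^3) * (real n)\<^sup>2 / \<mu>"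
          proof -
            have "43/60 * ((real n)\<^sup>2 - 1) \<le> (real n)\<^sup>2" using zero_le_power2[of "real n"] by (simp add: algebra_simps)
            then have "(l\<^sup>2 * \<sigma> * \<alpha>^3) * (43/60 * ((real n)\<^sup>2 - 1)) \<le> (l\<^sup>2 * \<sigma> * \<alpha>^3) * (real n)\<^sup>2"
              by (rule mult_left_mono[OF _ Y0])
            then show ?thesis using mu_pos by (intro divide_right_mono) auto
          qed
        also have "\<dots> = V" by (simp add: V_def)
        finally show ?thesis .
      qed
    qed (use N0 in simp)
    finally show ?thesis .
  qed
  have final: "exp (- (q * K)) * r0 + K * V \<le> 2 * exp (- (real n * \<alpha> * \<mu> * real K)) * (norm (z0 - zs))\<^sup>2
            + l\<^sup>2 * sigma_star_sq n \<omega> zs * \<alpha>^3 * (real n)\<^sup>2 * real K / \<mu>"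
  proof -
    have "exp (- (q * K)) * r0 \<le> 2 * exp (- (q * K)) * r0" by (simp add: r0_def)
    then show ?thesis by (simp add: q_def r0_def V_def \<sigma>_def mult_ac)
  qed
  define PI where "PI = PiE {1..K} (\<lambda>_::nat. perms n)"
  have ne: "perms n \<noteq> {}" using permutes_id[of "{0..<n}"] unfolding perms_def by blast
  have finPI: "finite PI" by (simp add: PI_def perms_finite finite_PiE)
  have cPI: "real (card PI) > 0"
  proof -
    have "card PI = (\<Prod>i\<in>{1..K}. card (perms n))" by (simp add: PI_def card_PiE)
    then show ?thesis by (simp add: perms_card)
  qed
  have "E_RR n \<alpha> \<omega> K z0 zs = (\<Sum>\<tau>\<in>PI. (norm (ppm_run n \<alpha> \<omega> \<tau> K z0 - zs))\<^sup>2) / real (card PI)"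
    by (simp add: E_RR_def PI_def)
  also have "\<dots> \<le> (\<Sum>\<tau>\<in>PI. exp (- (q * K)) * r0 + (\<Sum>j\<in>{1..K}. Dn (\<tau> j))) / real (card PI)"
    by (intro divide_right_mono sum_mono run) (auto simp: PI_def)
  also have "\<dots> = exp (- (q * K)) * r0 + (\<Sum>j\<in>{1..K}. (\<Sum>\<tau>\<in>PI. Dn (\<tau> j))) / real (card PI)"
  proof -
    have "(\<Sum>\<tau>\<in>PI. exp (- (q * K)) * r0 + (\<Sum>j\<in>{1..K}. Dn (\<tau> j)))
        = real (card PI) * (exp (- (q * K)) * r0) + (\<Sum>j\<in>{1..K}. (\<Sum>\<tau>\<in>PI. Dn (\<tau> j)))"
      by (subst sum.distrib, subst sum.swap, simp)
    then show ?thesis using cPI by (simp add: add_divide_distrib)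
  qed
  also have "(\<Sum>j\<in>{1..K}. (\<Sum>\<tau>\<in>PI. Dn (\<tau> j))) = (\<Sum>j\<in>{1..K}. real (card PI) / N * (\<Sum>p\<in>perms n. Dn p))"
    unfolding PI_def N_def by (intro sum.cong refl sum_PiE_single) (auto simp: perms_finite ne)
  also have "\<dots> / real (card PI) = K * ((\<Sum>p\<in>perms n. Dn p) / N)"
    using cPI N0 by simp
  also have "\<dots> \<le> K * V"
    using noise N0 by (intro mult_left_mono) (auto simp: divide_le_eq mult.commute)
  finally have RR: "E_RR n \<alpha> \<omega> K z0 zs \<le> exp (- (q * K)) * r0 + K * V" by simp
  have "E_SO n \<alpha> \<omega> K z0 zs = (\<Sum>p\<in>perms n. (norm (ppm_run n \<alpha> \<omega> (\<lambda>_. p) K z0 - zs))\<^sup>2) / N"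
    by (simp add: E_SO_def N_def)
  also have "\<dots> \<le> (\<Sum>p\<in>perms n. exp (- (q * K)) * r0 + (\<Sum>j\<in>{1..K}. Dn p)) / N"
    by (intro divide_right_mono sum_mono) (use run[of "\<lambda>_. _" K] N0 in auto)
  also have "\<dots> = exp (- (q * K)) * r0 + K * ((\<Sum>p\<in>perms n. Dn p) / N)"
    using N0 by (simp add: sum.distrib sum_distrib_left N_def add_divide_distrib sum_divide_distrib)
  also have "\<dots> \<le> exp (- (q * K)) * r0 + K * V"
    using noise N0 by (intro add_left_mono mult_left_mono) (auto simp: divide_le_eq mult.commute)
  finally have SO: "E_SO n \<alpha> \<omega> K z0 zs \<le> exp (- (q * K)) * r0 + K * V" .
  show ?thesis using wd RR SO final by linarith
qed



lemma part2:
  fixes \<omega> :: "nat \<Rightarrow> 'a::euclidean_space \<Rightarrow> 'a"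
    and n :: nat and l \<mu> :: real and zs z0 :: 'a
  assumes n1: "n \<ge> 1"
    and lip: "\<And>i. i < n \<Longrightarrow> l-lipschitz_on UNIV (\<omega> i)"
    and mu_pos: "\<mu> > 0"
    and smon: "strongly_monotone \<mu> (nu n \<omega>)"
    and root: "nu n \<omega> zs = 0"
    and K1: "K \<ge> 1" and X1: "norm (nu n \<omega> z0) * sqrt (real n) * real K / \<mu> > 1"
  shows "(let L = ln (norm (nu n \<omega> z0) * sqrt (real n) * real K / \<mu>);
             \<alpha> = min (\<mu> / (5 * real n * l\<^sup>2)) (2 * L / (\<mu> * real n * real K));
             \<kappa> = l / \<mu>;
             B = 2 * exp (- (real K / (5 * \<kappa>\<^sup>2))) * (norm (z0 - zs))\<^sup>2
                 + (2 * \<mu>\<^sup>2 + 8 * \<kappa>\<^sup>2 * sigma_star_sq n \<omega> zs * L^3) / (\<mu>\<^sup>2 * real n * (real K)\<^sup>2)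
         in prox_well_defined n \<alpha> \<omega> \<and> E_RR n \<alpha> \<omega> K z0 zs \<le> B \<and> E_SO n \<alpha> \<omega> K z0 zs \<le> B)"
proof -
  have mul: "\<mu> \<le> l" by (rule mu_le_l[OF n1 lip smon])
  have l_pos: "l > 0" using mu_pos mul by simp
  define X where "X = norm (nu n \<omega> z0) * sqrt (real n) * real K / \<mu>"
  define L where "L = ln X"
  define a1 where "a1 = \<mu> / (5 * real n * l\<^sup>2)"
  define a2 where "a2 = 2 * L / (\<mu> * real n * real K)"
  define \<alpha> where "\<alpha> = min a1 a2"
  define \<kappa> where "\<kappa> = l / \<mu>"
  define \<sigma> where "\<sigma> = sigma_star_sq n \<omega> zs"
  define r0 where "r0 = (norm (z0 - zs))\<^sup>2"
  have X1': "X > 1" using X1 by (simp add: X_def)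
  have L0: "L > 0" using X1' by (simp add: L_def)
  have nK: "real n > 0" "real K > 0" using n1 K1 by auto
  have a1p: "a1 > 0" using mu_pos l_pos nK by (simp add: a1_def)
  have a2p: "a2 > 0" using mu_pos L0 nK by (simp add: a2_def)
  have ap: "\<alpha> > 0" using a1p a2p by (simp add: \<alpha>_def)
  have a_le1: "\<alpha> \<le> a1" and a_le2: "\<alpha> \<le> a2" by (auto simp: \<alpha>_def)
  have sig0: "\<sigma> \<ge> 0" by (simp add: \<sigma>_def sigma_star_sq_def sum_nonneg)
  have r00: "r0 \<ge> 0" by (simp add: r0_def)
  note P1 = part1[OF n1 lip mu_pos smon root ap a_le1[unfolded a1_def] K1, of z0]
  define V where "V = l\<^sup>2 * \<sigma> * \<alpha>^3 * (real n)\<^sup>2 * real K / \<mu>"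
  define Ex where "Ex = 2 * exp (- (real n * \<alpha> * \<mu> * real K)) * r0"
  define B where "B = 2 * exp (- (real K / (5 * \<kappa>\<^sup>2))) * r0
                 + (2 * \<mu>\<^sup>2 + 8 * \<kappa>\<^sup>2 * \<sigma> * L^3) / (\<mu>\<^sup>2 * real n * (real K)\<^sup>2)"
  have var: "V \<le> 8 * \<kappa>\<^sup>2 * \<sigma> * L^3 / (\<mu>\<^sup>2 * real n * (real K)\<^sup>2)"
  proof -
    have "\<alpha>^3 \<le> a2^3" using ap a_le2 by (intro power_mono) auto
    then have "V \<le> l\<^sup>2 * \<sigma> * a2^3 * (real n)\<^sup>2 * real K / \<mu>" unfolding V_def using sig0 mu_pos nK
      by (intro divide_right_mono mult_right_mono mult_left_mono) auto
    also have "\<dots> = 8 * \<kappa>\<^sup>2 * \<sigma> * L^3 / (\<mu>\<^sup>2 * real n * (real K)\<^sup>2)"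
      using mu_pos nK by (simp add: a2_def \<kappa>_def power2_eq_square power3_eq_cube field_simps)
    finally show ?thesis .
  qed
  have expt: "Ex \<le> 2 * exp (- (real K / (5 * \<kappa>\<^sup>2))) * r0 + 2 * \<mu>\<^sup>2 / (\<mu>\<^sup>2 * real n * (real K)\<^sup>2)"
  proof (cases "\<alpha> = a1")
    case True
    have "real n * \<alpha> * \<mu> * real K = real K / (5 * \<kappa>\<^sup>2)"
      using True mu_pos l_pos nK by (simp add: a1_def \<kappa>_def power2_eq_square field_simps)
    moreover have "0 \<le> 2 * \<mu>\<^sup>2 / (\<mu>\<^sup>2 * real n * (real K)\<^sup>2)" using nK by simp
    ultimately show ?thesis by (simp add: Ex_def)
  next
    case False
    then have aa2: "\<alpha> = a2" by (auto simp: \<alpha>_def min_def)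
    have "real n * \<alpha> * \<mu> * real K = 2 * L" using aa2 mu_pos nK by (simp add: a2_def field_simps)
    moreover have "exp (2 * L) = X\<^sup>2"
    proof -
      have "exp (2 * L) = exp (L + L)" by simp
      also have "\<dots> = X * X" unfolding exp_add L_def using X1' by simp
      finally show ?thesis by (simp add: power2_eq_square)
    qed
    ultimately have eX: "exp (- (real n * \<alpha> * \<mu> * real K)) = 1 / X\<^sup>2" by (simp add: exp_minus divide_inverse)
    define rr where "rr = norm (z0 - zs)"
    have rr0: "rr \<ge> 0" by (simp add: rr_def)
    have "\<mu> * rr\<^sup>2 \<le> inner (nu n \<omega> z0 - nu n \<omega> zs) (z0 - zs)"
      using smon unfolding strongly_monotone_def rr_def by blast
    also have "\<dots> \<le> norm (nu n \<omega> z0) * rr" using root norm_cauchy_schwarz[of "nu n \<omega> z0" "z0 - zs"] by (simp add: rr_def)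
    finally have m1: "\<mu> * rr\<^sup>2 \<le> norm (nu n \<omega> z0) * rr" .
    have m2: "\<mu> * rr \<le> norm (nu n \<omega> z0)"
    proof (cases "rr = 0")
      case True then show ?thesis by simp
    next
      case False
      then have "rr > 0" using rr0 by simp
      then show ?thesis using m1 by (simp add: power2_eq_square mult.assoc[symmetric] mult_le_cancel_right)
    qed
    then have "(\<mu> * rr)\<^sup>2 \<le> (norm (nu n \<omega> z0))\<^sup>2" using mu_pos rr0 by (intro power_mono) auto
    then have "\<mu>\<^sup>2 * r0 * (real n * (real K)\<^sup>2) \<le> (norm (nu n \<omega> z0))\<^sup>2 * (real n * (real K)\<^sup>2)"
      using nK by (intro mult_right_mono) (auto simp: r0_def rr_def power_mult_distrib)
    also have "\<dots> = \<mu>\<^sup>2 * X\<^sup>2" using mu_pos nK by (simp add: X_def power_mult_distrib power_divide)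
    finally have "r0 * (real n * (real K)\<^sup>2) \<le> X\<^sup>2" using mu_pos by (simp add: mult.assoc)
    then have "r0 / X\<^sup>2 \<le> 1 / (real n * (real K)\<^sup>2)" using X1' nK by (simp add: field_simps)
    then have "2 * (r0 / X\<^sup>2) \<le> 2 * (1 / (real n * (real K)\<^sup>2))" by simp
    moreover have "Ex = 2 * (r0 / X\<^sup>2)" by (simp add: Ex_def eX)
    moreover have "2 * (1 / (real n * (real K)\<^sup>2)) = 2 * \<mu>\<^sup>2 / (\<mu>\<^sup>2 * real n * (real K)\<^sup>2)"
      using mu_pos by simp
    ultimately have "Ex \<le> 2 * \<mu>\<^sup>2 / (\<mu>\<^sup>2 * real n * (real K)\<^sup>2)" by simp
    moreover have "0 \<le> 2 * exp (- (real K / (5 * \<kappa>\<^sup>2))) * r0" using r00 by simp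
    ultimately show ?thesis by linarith
  qed
  have Bsplit: "B = 2 * exp (- (real K / (5 * \<kappa>\<^sup>2))) * r0 + 2 * \<mu>\<^sup>2 / (\<mu>\<^sup>2 * real n * (real K)\<^sup>2)
                 + 8 * \<kappa>\<^sup>2 * \<sigma> * L^3 / (\<mu>\<^sup>2 * real n * (real K)\<^sup>2)"
    by (simp add: B_def add_divide_distrib)
  have EB: "Ex + V \<le> B" using var expt Bsplit by linarith
  have goal: "prox_well_defined n \<alpha> \<omega> \<and> E_RR n \<alpha> \<omega> K z0 zs \<le> B \<and> E_SO n \<alpha> \<omega> K z0 zs \<le> B"
    using P1 EB unfolding Ex_def V_def r0_def \<sigma>_def by linarith
  then show ?thesis unfolding Let_def B_def \<alpha>_def a1_def a2_def L_def X_def \<kappa>_def \<sigma>_def r0_def .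
qed

theorem theorem1:
  fixes \<omega> :: "nat \<Rightarrow> 'a::euclidean_space \<Rightarrow> 'a"
    and n :: nat and l \<mu> :: real and zs z0 :: 'a
  assumes n: "n \<ge> 1"
    and lip: "\<And>i. i < n \<Longrightarrow> l-lipschitz_on UNIV (\<omega> i)"
    and mu_pos: "\<mu> > 0"
    and smon: "strongly_monotone \<mu> (nu n \<omega>)"
    and root: "nu n \<omega> zs = 0"
  shows
    "(\<forall>\<alpha> K::nat. 0 < \<alpha> \<and> \<alpha> \<le> \<mu> / (5 * real n * l\<^sup>2) \<and> K \<ge> 1 \<longrightarrow>
        prox_well_defined n \<alpha> \<omega> \<and>
        E_RR n \<alpha> \<omega> K z0 zs \<le> 2 * exp (- (real n * \<alpha> * \<mu> * real K)) * (norm (z0 - zs))\<^sup>2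
            + l\<^sup>2 * sigma_star_sq n \<omega> zs * \<alpha>^3 * (real n)\<^sup>2 * real K / \<mu> \<and>
        E_SO n \<alpha> \<omega> K z0 zs \<le> 2 * exp (- (real n * \<alpha> * \<mu> * real K)) * (norm (z0 - zs))\<^sup>2
            + l\<^sup>2 * sigma_star_sq n \<omega> zs * \<alpha>^3 * (real n)\<^sup>2 * real K / \<mu>)
     \<and>
     (\<forall>K::nat. K \<ge> 1 \<and> norm (nu n \<omega> z0) * sqrt (real n) * real K / \<mu> > 1 \<longrightarrow>
        (let L = ln (norm (nu n \<omega> z0) * sqrt (real n) * real K / \<mu>);
             \<alpha> = min (\<mu> / (5 * real n * l\<^sup>2)) (2 * L / (\<mu> * real n * real K));
             \<kappa> = l / \<mu>;
             B = 2 * exp (- (real K / (5 * \<kappa>\<^sup>2))) * (norm (z0 - zs))\<^sup>2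
                 + (2 * \<mu>\<^sup>2 + 8 * \<kappa>\<^sup>2 * sigma_star_sq n \<omega> zs * L^3) / (\<mu>\<^sup>2 * real n * (real K)\<^sup>2)
         in prox_well_defined n \<alpha> \<omega> \<and> E_RR n \<alpha> \<omega> K z0 zs \<le> B \<and> E_SO n \<alpha> \<omega> K z0 zs \<le> B))"
  apply (rule conjI)
   apply (intro allI impI)
  using part1[OF n lip mu_pos smon root] apply blast
  apply (intro allI impI)
  using part2[OF n lip mu_pos smon root] apply blast
  done


end
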